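(* Let $G>0$, $K>0$, $\lambda>0$, $\gamma\in(0,1)$, $R>0$, $m\ge 1$ an integer and $D_m\ge R^2/(m+1)$. Define $\kappa=G\pi(1-\gamma)/(\gamma K)$ and $\Lambda=\lambda\gamma K$. For $Z_m=(x_1,y_1,\dots,x_m,y_m)\in\mathbb{R}^{2m}$ let $$d_m(Z_m)=\Big(x_1+\tfrac R2\Big)^2+\sum_{i=1}^{m-1}(x_i-x_{i+1})^2+\Big(x_m-\tfrac R2\Big)^2+y_1^2+\sum_{i=1}^{m-1}(y_i-y_{i+1})^2+y_m^2,$$ and let $N_m$ be the number of potential relay sets $Z_m$ satisfying $d_m(Z_m)\le D_m$, as in the context. Then $$\mathbb{E}(N_m)=\frac{G\kappa^m}{m+1}\left\{\exp\!\Big(-\frac{\Lambda R^2}{m+1}\Big)-\exp(-\Lambda D_m)\sum_{i=0}^{m-1}\frac{1}{i!}\Big(\Lambda\Big(D_m-\frac{R^2}{m+1}\Big)\Big)^i\right\}.$$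
   Context: Model: a typical source is at $(-R/2,0)$ and its destination at $(R/2,0)$; an end-to-end transmission uses $m+1$ hops through $m$ relays, and a relay set (ordered $m$-tuple of relays, $i$-th relay at $(x_i,y_i)$) is identified with $Z_m\in\mathbb{R}^{2m}$, so $d_m(Z_m)$ is the sum of the squared hop lengths of the route source $\to$ relay $1\to\cdots\to$ relay $m\to$ destination. Nodes form a Poisson process of intensity $\lambda$, a fraction $\gamma$ of which are active transmitters (intensity $\lambda_t=\gamma\lambda$). The relay sets form a point process on $\mathbb{R}^{2m}$ with effective intensity $\lambda^m(1-\gamma)^m$. Each hop of length $r$ succeeds independently with probability $G\exp(-\lambda_t K r^2)$, so a relay set at $Z_m$ completes forwarding (is a "potential relay set") with probability $g_m(Z_m,\lambda_t)=G^{m+1}\exp(-\lambda_t K d_m(Z_m))$. $N_m$ is the number of potential relay sets subject to the constraint $d_m(Z_m)\le D_m$, i.e. $\mathbb{E}(N_m)=\int_{\{d_m(Z)\le D_m\}}\lambda^m(1-\gamma)^m\,G^{m+1}e^{-\lambda\gamma K d_m(Z)}\,dZ$. *)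

theory Defs
  imports "HOL-Analysis.Analysis"
begin

text \<open>A relay set Z_m in R^(2m) is a function on the index set {..<2m};
  relay i (1 <= i <= m) sits at (x_i, y_i) = (Z(2(i-1)), Z(2(i-1)+1)).\<close>

definition relay_x :: "(nat \<Rightarrow> real) \<Rightarrow> nat \<Rightarrow> real" where
  "relay_x Z i = Z (2 * (i - 1))"

definition relay_y :: "(nat \<Rightarrow> real) \<Rightarrow> nat \<Rightarrow> real" where
  "relay_y Z i = Z (2 * (i - 1) + 1)"

text \<open>Sum of squared hop lengths of source (-R/2,0) -> relays 1..m -> destination (R/2,0).\<close>
definition d_m :: "real \<Rightarrow> nat \<Rightarrow> (nat \<Rightarrow> real) \<Rightarrow> real" where
  "d_m R m Z =
     (relay_x Z 1 + R/2)\<^sup>2 + (\<Sum>i=1..m-1. (relay_x Z i - relay_x Z (i+1))\<^sup>2) + (relay_x Z m - R/2)\<^sup>2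
   + (relay_y Z 1)\<^sup>2 + (\<Sum>i=1..m-1. (relay_y Z i - relay_y Z (i+1))\<^sup>2) + (relay_y Z m)\<^sup>2"

text \<open>Probability that a relay set at Z completes forwarding.\<close>
definition g_m :: "real \<Rightarrow> real \<Rightarrow> real \<Rightarrow> nat \<Rightarrow> (nat \<Rightarrow> real) \<Rightarrow> real \<Rightarrow> real" where
  "g_m G K R m Z lam_t = G ^ (m+1) * exp (- lam_t * K * d_m R m Z)"

text \<open>E(N_m): integral over {d_m(Z) <= D} of the effective intensity
  lam^m (1-gamma)^m times g_m(Z, lam*gamma), w.r.t. Lebesgue measure on R^(2m).\<close>
definition expected_N :: "real \<Rightarrow> real \<Rightarrow> real \<Rightarrow> real \<Rightarrow> real \<Rightarrow> nat \<Rightarrow> real \<Rightarrow> ennreal" where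
  "expected_N G K lam gam R m D =
     (\<integral>\<^sup>+ Z. indicator {Z. d_m R m Z \<le> D} Z *
              ennreal (lam ^ m * (1 - gam) ^ m * g_m G K R m Z (lam * gam))
        \<partial>(PiM {..<2*m} (\<lambda>_. lborel)))"

end

theory Submission
  imports Defs "HOL-Probability.Distributions"
begin



fun ch :: "nat \<Rightarrow> real \<Rightarrow> real \<Rightarrow> real \<Rightarrow> real \<Rightarrow> (nat \<Rightarrow> real) \<Rightarrow> real" where
  "ch 0 a1 a2 b1 b2 Z = (a1-b1)\<^sup>2 + (a2-b2)\<^sup>2"
| "ch (Suc n) a1 a2 b1 b2 Z = ch n a1 a2 (Z (2*n)) (Z (2*n+1)) Z + (Z (2*n) - b1)\<^sup>2 + (Z (2*n+1) - b2)\<^sup>2"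

lemma ch_cong: "(\<And>i. i < 2*n \<Longrightarrow> Z i = Z' i) \<Longrightarrow> ch n a1 a2 b1 b2 Z = ch n a1 a2 b1 b2 Z'"
proof (induction n arbitrary: b1 b2)
  case 0 then show ?case by simp
next
  case (Suc n)
  have "Z (2*n) = Z' (2*n)" "Z (2*n+1) = Z' (2*n+1)" using Suc.prems by auto
  moreover have "ch n a1 a2 c1 c2 Z = ch n a1 a2 c1 c2 Z'" for c1 c2
    using Suc.prems by (intro Suc.IH) auto
  ultimately show ?case by simp
qed

lemma ch_meas:
  assumes "{..<2*n} \<subseteq> I" "f \<in> borel_measurable (PiM I (\<lambda>_. lborel))"
    "g \<in> borel_measurable (PiM I (\<lambda>_. lborel))"
  shows "(\<lambda>Z. ch n a1 a2 (f Z) (g Z) Z) \<in> borel_measurable (PiM I (\<lambda>_. lborel))"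
  using assms
proof (induction n arbitrary: f g)
  case 0 then show ?case by simp
next
  case (Suc n)
  have m1: "(\<lambda>Z. Z (2*n)) \<in> borel_measurable (PiM I (\<lambda>_. lborel))"
    using Suc.prems by (intro measurable_PiM_component_rev) auto
  have m2: "(\<lambda>Z. Z (2*n+1)) \<in> borel_measurable (PiM I (\<lambda>_. lborel))"
    using Suc.prems by (intro measurable_PiM_component_rev) auto
  have m3: "(\<lambda>Z. ch n a1 a2 (Z (2*n)) (Z (2*n+1)) Z) \<in> borel_measurable (PiM I (\<lambda>_. lborel))"
    using Suc.prems m1 m2 by (intro Suc.IH) auto
  show ?case unfolding ch.simps power2_eq_square
    by (intro borel_measurable_add borel_measurable_times borel_measurable_diff m1 m2 m3 Suc.prems(2,3))
qed

lemma ch_meas'[measurable]: "(\<lambda>Z. ch n a1 a2 b1 b2 Z) \<in> borel_measurable (PiM {..<2*n} (\<lambda>_. lborel))"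
  using ch_meas[of n "{..<2*n}" "\<lambda>_. b1" "\<lambda>_. b2"] by simp

lemma ch_formula:
  "ch (Suc n) a1 a2 b1 b2 Z = (Z 0 - a1)\<^sup>2 + (Z 1 - a2)\<^sup>2
     + (\<Sum>i=1..n. (Z (2*(i-1)) - Z (2*i))\<^sup>2 + (Z (2*(i-1)+1) - Z (2*i+1))\<^sup>2)
     + (Z (2*n) - b1)\<^sup>2 + (Z (2*n+1) - b2)\<^sup>2"
proof (induction n arbitrary: b1 b2)
  case 0 then show ?case by (simp add: power2_commute)
next
  case (Suc n)
  show ?case using Suc.IH[of "Z (2*Suc n)" "Z (2*Suc n+1)"]
    by (simp add: algebra_simps)
qed

lemma d_m_ch: "m \<ge> 1 \<Longrightarrow> d_m R m Z = ch m (-R/2) 0 (R/2) 0 Z"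
proof -
  assume "m \<ge> 1"
  then obtain n where m: "m = Suc n" by (cases m) auto
  have "d_m R m Z = (Z 0 + R/2)\<^sup>2 + (\<Sum>i=1..n. (Z (2*(i-1)) - Z (2*i))\<^sup>2) + (Z (2*n) - R/2)\<^sup>2
     + (Z 1)\<^sup>2 + (\<Sum>i=1..n. (Z (2*(i-1)+1) - Z (2*i+1))\<^sup>2) + (Z (2*n+1))\<^sup>2"
    unfolding d_m_def relay_x_def relay_y_def m
    by (auto intro!: sum.cong simp: algebra_simps)
  also have "\<dots> = ch m (-R/2) 0 (R/2) 0 Z"
    unfolding m ch_formula by (simp add: sum.distrib algebra_simps)
  finally show ?thesis .
qed




lemma beta_prod: "Beta (1/2) (real n + 1) * Beta (1/2) (real n + 3/2) = pi / (real n + 1)"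
proof -
  have g1: "Gamma (real n + 1) = fact n" using Gamma_fact[of n] by (simp add: add.commute)
  have g2: "Gamma (real n + 2) = fact (Suc n)" using Gamma_fact[of "Suc n"] by (simp add: add.commute)
  have pos: "Gamma (real n + 3/2) > 0" by (intro Gamma_real_pos) simp
  have e1: "1/2 + (real n + 1) = real n + 3/2" by simp
  have e2: "1/2 + (real n + 3/2) = real n + 2" by simp
  have gen: "sqrt pi * fact n / g * (sqrt pi * g / fact (Suc n)) = pi / (real n + 1)" if "g \<noteq> 0" for g :: real
  proof -
    have "fact n * (real n + 1) \<noteq> 0" by simp
    then show ?thesis using that by (simp add: divide_simps)
  qed
  show ?thesis unfolding Beta_def e1 e2 g1 g2 Gamma_one_half_real using gen[of "Gamma (real n + 3/2)"] pos
    by (simp add: mult_ac less_imp_neq[symmetric])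
qed

lemma L1:
  assumes "A > 0"
  shows "(\<integral>\<^sup>+u. ennreal (indicator {-sqrt A..sqrt A} u * sqrt (A - u\<^sup>2) ^ k) \<partial>lborel)
     = ennreal (sqrt A ^ (k+1) * Beta (1/2) (real k / 2 + 1))"
proof -
  have sA: "sqrt A > 0" using assms by simp
  have "(\<integral>\<^sup>+u. ennreal (indicator {-sqrt A..sqrt A} u * sqrt (A - u\<^sup>2) ^ k) \<partial>lborel)
     = ennreal (sqrt A) * (\<integral>\<^sup>+x. ennreal (indicator {-sqrt A..sqrt A} (sqrt A * x) * sqrt (A - (sqrt A * x)\<^sup>2) ^ k) \<partial>lborel)"
    using sA by (subst nn_integral_real_affine[where c="sqrt A" and t=0]) auto
  also have "(\<lambda>x. ennreal (indicator {-sqrt A..sqrt A} (sqrt A * x) * sqrt (A - (sqrt A * x)\<^sup>2) ^ k))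
      = (\<lambda>x. ennreal (sqrt A ^ k) * ennreal (indicator {-1..1} x * sqrt (1 - x\<^sup>2) ^ k))"
  proof
    fix x
    have "A - (sqrt A * x)\<^sup>2 = A * (1 - x\<^sup>2)" using assms by (simp add: power_mult_distrib algebra_simps)
    hence s: "sqrt (A - (sqrt A * x)\<^sup>2) = sqrt A * sqrt (1 - x\<^sup>2)" by (simp add: real_sqrt_mult)
    have i: "(sqrt A * x \<in> {-sqrt A..sqrt A}) = (x \<in> {-1..1})"
    proof -
      have 1: "(-sqrt A \<le> sqrt A * x) = (sqrt A * (-1) \<le> sqrt A * x)" by simp
      have 2: "(sqrt A * x \<le> sqrt A) = (sqrt A * x \<le> sqrt A * 1)" by simp
      show ?thesis unfolding atLeastAtMost_iff 1 2 mult_le_cancel_left_pos[OF sA] by simp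
    qed
    show "ennreal (indicator {-sqrt A..sqrt A} (sqrt A * x) * sqrt (A - (sqrt A * x)\<^sup>2) ^ k)
      = ennreal (sqrt A ^ k) * ennreal (indicator {-1..1} x * sqrt (1 - x\<^sup>2) ^ k)"
      unfolding s indicator_def i using sA
      by (auto simp: power_mult_distrib ennreal_mult'[symmetric] mult_ac)
  qed
  also have "(\<integral>\<^sup>+x. ennreal (sqrt A ^ k) * ennreal (indicator {-1..1} x * sqrt (1 - x\<^sup>2) ^ k) \<partial>lborel)
     = ennreal (sqrt A ^ k) * ennreal (Beta (1 / 2) (real k / 2 + 1))"
    by (subst nn_integral_cmult) (auto simp: emeasure_cball_aux_integral)
  finally show ?thesis using sA
    by (simp add: ennreal_mult'[symmetric] mult_ac)
qed




definition h2 :: "real \<Rightarrow> nat \<Rightarrow> real \<Rightarrow> real \<Rightarrow> real" where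
  "h2 \<rho> n u v = (if u\<^sup>2 + v\<^sup>2 \<le> \<rho> then (\<rho> - u\<^sup>2 - v\<^sup>2) ^ n else 0)"

lemma h2_meas[measurable]: "(\<lambda>u. h2 \<rho> n u v) \<in> borel_measurable borel"
  unfolding h2_def by measurable

lemma inner_zero:
  assumes "\<And>u. u \<noteq> 0 \<Longrightarrow> f u = 0"
  shows "(\<integral>\<^sup>+u. ennreal (f u) \<partial>lborel) = 0"
proof -
  have "AE u in lborel. u \<noteq> 0"
    by (intro AE_not_in[of "{0}", simplified]) auto
  then have "AE u in lborel. ennreal (f u) = 0"
    by eventually_elim (use assms in auto)
  from nn_integral_cong_AE[OF this] show ?thesis by simp
qed

lemma inner2:
  assumes "\<rho> > 0"
  shows "(\<integral>\<^sup>+u. ennreal (h2 \<rho> n u v) \<partial>lborel)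
    = ennreal (Beta (1/2) (real n + 1) * (indicator {-sqrt \<rho>..sqrt \<rho>} v * sqrt (\<rho> - v\<^sup>2) ^ (2*n+1)))"
proof (cases "v\<^sup>2 < \<rho>")
  case True
  define A where "A = \<rho> - v\<^sup>2"
  have A: "A > 0" using True by (simp add: A_def)
  have "h2 \<rho> n u v = indicator {-sqrt A..sqrt A} u * sqrt (A - u\<^sup>2) ^ (2*n)" for u
  proof -
    have "(u\<^sup>2 + v\<^sup>2 \<le> \<rho>) = (u \<in> {-sqrt A..sqrt A})"
      unfolding A_def atLeastAtMost_iff
      by (metis abs_le_iff add.commute le_diff_eq minus_le_iff real_sqrt_abs real_sqrt_le_iff)
    moreover have "u\<^sup>2 \<le> A \<Longrightarrow> sqrt (A - u\<^sup>2) ^ (2*n) = (A - u\<^sup>2) ^ n"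
      by (simp add: power_mult)
    ultimately show ?thesis unfolding h2_def A_def indicator_def by (auto simp: algebra_simps)
  qed
  then have "(\<integral>\<^sup>+u. ennreal (h2 \<rho> n u v) \<partial>lborel)
     = (\<integral>\<^sup>+u. ennreal (indicator {-sqrt A..sqrt A} u * sqrt (A - u\<^sup>2) ^ (2*n)) \<partial>lborel)" by simp
  also have "\<dots> = ennreal (sqrt A ^ (2*n+1) * Beta (1/2) (real (2*n) / 2 + 1))"
    by (rule L1[OF A])
  also have "v \<in> {-sqrt \<rho>..sqrt \<rho>}" using True
    by (metis abs_le_iff atLeastAtMost_iff less_eq_real_def minus_le_iff real_sqrt_abs real_sqrt_le_iff)
  ultimately show ?thesis by (simp add: A_def mult_ac)
next
  case False
  have "(\<integral>\<^sup>+u. ennreal (h2 \<rho> n u v) \<partial>lborel) = 0"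
  proof (rule inner_zero)
    fix u :: real assume "u \<noteq> 0"
    then have "u\<^sup>2 > 0" by simp
    then have "\<not> u\<^sup>2 + v\<^sup>2 \<le> \<rho>" using False by linarith
    then show "h2 \<rho> n u v = 0" unfolding h2_def by auto
  qed
  moreover have "indicator {-sqrt \<rho>..sqrt \<rho>} v * sqrt (\<rho> - v\<^sup>2) ^ (2*n+1) = (0::real)"
  proof (cases "v\<^sup>2 = \<rho>")
    case True then show ?thesis by simp
  next
    case F2: False
    then have "v\<^sup>2 > \<rho>" using False by simp
    then have "v \<notin> {-sqrt \<rho>..sqrt \<rho>}"
      by (metis abs_le_iff atLeastAtMost_iff minus_le_iff not_less real_sqrt_abs real_sqrt_le_iff)
    then show ?thesis by simp
  qed
  ultimately show ?thesis by (metis mult_zero_right ennreal_0)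
qed

lemma disk2:
  assumes "\<rho> > 0"
  shows "(\<integral>\<^sup>+v. \<integral>\<^sup>+u. ennreal (h2 \<rho> n u v) \<partial>lborel \<partial>lborel) = ennreal (pi * \<rho> ^ (n+1) / (real n + 1))"
proof -
  have B0: "Beta (1/2) (real n + 1) \<ge> 0"
    unfolding Beta_def by (intro divide_nonneg_pos mult_nonneg_nonneg) (auto intro: less_imp_le)
  have "(\<integral>\<^sup>+v. \<integral>\<^sup>+u. ennreal (h2 \<rho> n u v) \<partial>lborel \<partial>lborel)
     = (\<integral>\<^sup>+v. ennreal (Beta (1/2) (real n + 1)) * ennreal (indicator {-sqrt \<rho>..sqrt \<rho>} v * sqrt (\<rho> - v\<^sup>2) ^ (2*n+1)) \<partial>lborel)"
    using B0 by (intro nn_integral_cong) (simp add: inner2[OF assms] ennreal_mult')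
  also have "\<dots> = ennreal (Beta (1/2) (real n + 1)) * ennreal (sqrt \<rho> ^ (2*n+1+1) * Beta (1/2) (real (2*n+1) / 2 + 1))"
    by (subst nn_integral_cmult, simp, subst L1[OF assms], rule refl)
  also have "sqrt \<rho> ^ (2*n+1+1) = \<rho> ^ (n+1)"
  proof -
    have "sqrt \<rho> ^ (2*n+1+1) = (sqrt \<rho> ^ 2) ^ (n+1)"
      unfolding power_mult[symmetric] by (simp add: algebra_simps)
    then show ?thesis using assms by simp
  qed
  also have "real (2*n+1) / 2 + 1 = real n + 3/2" by (simp add: field_simps)
  also have "ennreal (Beta (1/2) (real n + 1)) * ennreal (\<rho> ^ (n+1) * Beta (1/2) (real n + 3/2))
       = ennreal (Beta (1/2) (real n + 1) * Beta (1/2) (real n + 3/2) * \<rho> ^ (n+1))"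
    using B0 by (simp add: ennreal_mult'[symmetric] mult_ac)
  also note beta_prod
  finally show ?thesis by simp
qed




lemma shift_int:
  fixes f :: "real \<Rightarrow> ennreal"
  assumes [measurable]: "f \<in> borel_measurable borel"
  shows "(\<integral>\<^sup>+u. f (u - p) \<partial>lborel) = (\<integral>\<^sup>+u. f u \<partial>lborel)"
  using nn_integral_real_affine[of "\<lambda>u. f (u - p)" 1 p] by simp

lemma disk2_shift:
  assumes "\<rho> > 0"
  shows "(\<integral>\<^sup>+v. \<integral>\<^sup>+u. ennreal (h2 \<rho> n (u - p1) (v - p2)) \<partial>lborel \<partial>lborel) = ennreal (pi * \<rho> ^ (n+1) / (real n + 1))"
proof -
  let ?g = "\<lambda>v. ennreal (Beta (1/2) (real n + 1) * (indicator {-sqrt \<rho>..sqrt \<rho>} v * sqrt (\<rho> - v\<^sup>2) ^ (2*n+1)))"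
  have "(\<integral>\<^sup>+v. \<integral>\<^sup>+u. ennreal (h2 \<rho> n (u - p1) (v - p2)) \<partial>lborel \<partial>lborel) = (\<integral>\<^sup>+v. ?g (v - p2) \<partial>lborel)"
    by (intro nn_integral_cong) (simp add: shift_int[of "\<lambda>u. ennreal (h2 \<rho> n u _)"] inner2[OF assms])
  also have "\<dots> = (\<integral>\<^sup>+v. ?g v \<partial>lborel)"
    by (rule shift_int) measurable
  also have "\<dots> = (\<integral>\<^sup>+v. \<integral>\<^sup>+u. ennreal (h2 \<rho> n u v) \<partial>lborel \<partial>lborel)"
    by (simp add: inner2[OF assms])
  also have "\<dots> = ennreal (pi * \<rho> ^ (n+1) / (real n + 1))" by (rule disk2[OF assms])
  finally show ?thesis .
qed

lemma disk2_gen: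
  assumes q: "q > 0"
  shows "(\<integral>\<^sup>+v. \<integral>\<^sup>+u. ennreal (if q*((u-p1)\<^sup>2+(v-p2)\<^sup>2) \<le> T then (T - q*((u-p1)\<^sup>2+(v-p2)\<^sup>2))^n else 0) \<partial>lborel \<partial>lborel)
     = ennreal (if T > 0 then pi * T^(n+1) / (q * (real n + 1)) else 0)"
proof -
  have eq: "(if q*((u-p1)\<^sup>2+(v-p2)\<^sup>2) \<le> T then (T - q*((u-p1)\<^sup>2+(v-p2)\<^sup>2))^n else 0)
      = q^n * h2 (T/q) n (u - p1) (v - p2)" for u v
  proof -
    have "(q*((u-p1)\<^sup>2+(v-p2)\<^sup>2) \<le> T) = ((u-p1)\<^sup>2+(v-p2)\<^sup>2 \<le> T/q)"
      using q by (simp add: pos_le_divide_eq mult.commute)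
    moreover have "T - q*((u-p1)\<^sup>2+(v-p2)\<^sup>2) = q * (T/q - (u-p1)\<^sup>2 - (v-p2)\<^sup>2)"
      using q by (simp add: field_simps)
    ultimately show ?thesis unfolding h2_def by (simp add: power_mult_distrib)
  qed
  have "(\<integral>\<^sup>+v. \<integral>\<^sup>+u. ennreal (if q*((u-p1)\<^sup>2+(v-p2)\<^sup>2) \<le> T then (T - q*((u-p1)\<^sup>2+(v-p2)\<^sup>2))^n else 0) \<partial>lborel \<partial>lborel)
     = (\<integral>\<^sup>+v. \<integral>\<^sup>+u. ennreal (q^n) * ennreal (h2 (T/q) n (u - p1) (v - p2)) \<partial>lborel \<partial>lborel)"
    unfolding eq using q by (intro nn_integral_cong) (simp add: ennreal_mult')
  also have "\<dots> = ennreal (q^n) * (\<integral>\<^sup>+v. \<integral>\<^sup>+u. ennreal (h2 (T/q) n (u - p1) (v - p2)) \<partial>lborel \<partial>lborel)"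
  proof -
    have m: "(\<lambda>v. \<integral>\<^sup>+u. ennreal (h2 (T/q) n (u-p1) (v-p2)) \<partial>lborel) \<in> borel_measurable lborel"
      unfolding h2_def by measurable
    show ?thesis using m by (simp add: nn_integral_cmult)
  qed
  also have "\<dots> = ennreal (if T > 0 then pi * T^(n+1) / (q * (real n + 1)) else 0)"
  proof (cases "T > 0")
    case True
    then have "T/q > 0" using q by simp
    then have "ennreal (q^n) * (\<integral>\<^sup>+v. \<integral>\<^sup>+u. ennreal (h2 (T/q) n (u - p1) (v - p2)) \<partial>lborel \<partial>lborel)
       = ennreal (q^n * (pi * (T/q) ^ (n+1) / (real n + 1)))"
      using q by (simp add: disk2_shift ennreal_mult'[symmetric])
    also have "q^n * (pi * (T/q) ^ (n+1) / (real n + 1)) = pi * T^(n+1) / (q * (real n + 1))"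
    proof -
      have "q^n > 0" using q by simp
      then show ?thesis using q by (simp add: power_divide divide_simps)
    qed
    finally show ?thesis using True by simp
  next
    case False
    have "(\<integral>\<^sup>+u. ennreal (h2 (T/q) n (u - p1) (v - p2)) \<partial>lborel) = 0" for v
    proof -
      have "(\<integral>\<^sup>+u. ennreal (h2 (T/q) n (u - p1) (v - p2)) \<partial>lborel) = (\<integral>\<^sup>+u. ennreal (h2 (T/q) n u (v - p2)) \<partial>lborel)"
        by (rule shift_int[of "\<lambda>u. ennreal (h2 (T/q) n u (v - p2))"]) measurable
      also have "\<dots> = 0"
      proof (rule inner_zero)
        fix u :: real assume "u \<noteq> 0"
        then have "u\<^sup>2 > 0" by simp
        moreover have "T/q \<le> 0" using False q by (simp add: divide_nonpos_pos)
        moreover have "(v-p2)\<^sup>2 \<ge> 0" by simp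
        ultimately have "\<not> u\<^sup>2 + (v-p2)\<^sup>2 \<le> T/q" by linarith
        then show "h2 (T/q) n u (v - p2) = 0" unfolding h2_def by simp
      qed
      finally show ?thesis .
    qed
    then show ?thesis using False by simp
  qed
  finally show ?thesis .
qed




lemma quad_id:
  fixes N a b u :: real
  assumes "N > 0"
  shows "(a - u)\<^sup>2 / N + (u - b)\<^sup>2 = (N+1)/N * (u - (a + N*b)/(N+1))\<^sup>2 + (a - b)\<^sup>2/(N+1)"
proof -
  have key: "(N+1)*((a-u)\<^sup>2 + N*(u-b)\<^sup>2) = ((N+1)*u - a - N*b)\<^sup>2 + N*(a-b)\<^sup>2"
    by algebra
  define w where "w = (N+1)*u - a - N*b"
  have "u - (a + N*b)/(N+1) = w/(N+1)" using assms by (simp add: field_simps w_def)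
  moreover have "(N+1)/N * (w/(N+1))\<^sup>2 = w\<^sup>2/(N*(N+1))" using assms by (simp add: power_divide power2_eq_square divide_simps)
  moreover have "(a-b)\<^sup>2/(N+1) = N*(a-b)\<^sup>2/(N*(N+1))" using assms by simp
  ultimately have "(N+1)/N * (u - (a + N*b)/(N+1))\<^sup>2 + (a - b)\<^sup>2/(N+1)
     = (((N+1)*u - a - N*b)\<^sup>2 + N*(a-b)\<^sup>2) / (N*(N+1))"
    by (simp add: add_divide_distrib w_def)
  also have "\<dots> = (N+1)*((a-u)\<^sup>2 + N*(u-b)\<^sup>2) / (N*(N+1))" by (simp only: key)
  also have "\<dots> = ((a-u)\<^sup>2 + N*(u-b)\<^sup>2) / N" using assms by simp
  also have "\<dots> = (a - u)\<^sup>2 / N + (u - b)\<^sup>2" using assms by (simp add: add_divide_distrib)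
  finally show ?thesis by simp
qed

lemma vol:
  "(\<integral>\<^sup>+Z. indicator {Z. ch n a1 a2 b1 b2 Z \<le> D} Z \<partial>PiM {..<2*n} (\<lambda>_. lborel))
   = ennreal (pi^n / (fact n * (real n + 1)) *
       (if ((a1-b1)\<^sup>2+(a2-b2)\<^sup>2)/(real n+1) \<le> D then (D - ((a1-b1)\<^sup>2+(a2-b2)\<^sup>2)/(real n+1))^n else 0))"
proof (induction n arbitrary: b1 b2 D)
  case 0
  then show ?case by (simp add: PiM_empty nn_integral_count_space_finite indicator_def)
next
  case (Suc n)
  define N where "N = real n + 1"
  define q where "q = (N+1)/N"
  define p1 where "p1 = (a1 + N*b1)/(N+1)"
  define p2 where "p2 = (a2 + N*b2)/(N+1)"
  define s where "s = (a1-b1)\<^sup>2+(a2-b2)\<^sup>2"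
  define T where "T = D - s/(N+1)"
  interpret product_sigma_finite "\<lambda>_::nat. lborel::real measure" by standard
  define I0 where "I0 = {..<2*n}"
  have fin: "finite I0" by (simp add: I0_def)
  have Iset: "{..<2*Suc n} = insert (2*n+1) (insert (2*n) I0)" by (auto simp: I0_def)
  have chS: "ch n a1 a2 c d (x(Suc (2*n) := v)) = ch n a1 a2 c d x" for c d x v by (rule ch_cong) auto
  have chS2: "ch n a1 a2 u v (x(2*n := u)) = ch n a1 a2 u v x" for x u v
    by (rule ch_cong) auto
  have m1[measurable]: "(\<lambda>Z. ch (Suc n) a1 a2 b1 b2 Z) \<in> borel_measurable (PiM (insert (2*n+1) (insert (2*n) I0)) (\<lambda>_. lborel))"
    using ch_meas[of "Suc n" "insert (2*n+1) (insert (2*n) I0)" "\<lambda>_. b1" "\<lambda>_. b2"] Iset by simp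
  have m2[measurable]: "(\<lambda>x. ch n a1 a2 (x (2*n)) v x) \<in> borel_measurable (PiM (insert (2*n) I0) (\<lambda>_. lborel))" for v
    by (rule ch_meas) (auto simp: I0_def intro!: measurable_PiM_component_rev)
  have "(\<integral>\<^sup>+Z. indicator {Z. ch (Suc n) a1 a2 b1 b2 Z \<le> D} Z \<partial>PiM {..<2*Suc n} (\<lambda>_. lborel))
     = (\<integral>\<^sup>+v. \<integral>\<^sup>+x. indicator {Z. ch (Suc n) a1 a2 b1 b2 Z \<le> D} (x(2*n+1 := v)) \<partial>PiM (insert (2*n) I0) (\<lambda>_. lborel) \<partial>lborel)"
  proof -
    have mf: "indicator {Z. ch (Suc n) a1 a2 b1 b2 Z \<le> D} \<in> borel_measurable (PiM (insert (2*n+1) (insert (2*n) I0)) (\<lambda>_. lborel))"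
      by measurable
    show ?thesis unfolding Iset by (rule product_nn_integral_insert_rev[OF _ _ mf]) (auto simp: fin I0_def)
  qed
  also have "\<dots> = (\<integral>\<^sup>+v. \<integral>\<^sup>+x. indicator {x. ch n a1 a2 (x (2*n)) v x + (x (2*n) - b1)\<^sup>2 + (v - b2)\<^sup>2 \<le> D} x
         \<partial>PiM (insert (2*n) I0) (\<lambda>_. lborel) \<partial>lborel)"
    by (simp add: chS indicator_def)
  also have "\<dots> = (\<integral>\<^sup>+v. \<integral>\<^sup>+u. \<integral>\<^sup>+x. indicator {x. ch n a1 a2 (x (2*n)) v x + (x (2*n) - b1)\<^sup>2 + (v - b2)\<^sup>2 \<le> D} (x(2*n := u))
         \<partial>PiM I0 (\<lambda>_. lborel) \<partial>lborel \<partial>lborel)"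
  proof -
    have mf2: "indicator {x. ch n a1 a2 (x (2*n)) v x + (x (2*n) - b1)\<^sup>2 + (v - b2)\<^sup>2 \<le> D}
       \<in> borel_measurable (PiM (insert (2*n) I0) (\<lambda>_. lborel))" for v
      by measurable
    show ?thesis by (intro nn_integral_cong product_nn_integral_insert_rev[OF fin _ mf2]) (simp add: I0_def)
  qed
  also have "\<dots> = (\<integral>\<^sup>+v. \<integral>\<^sup>+u. \<integral>\<^sup>+x. indicator {x. ch n a1 a2 u v x \<le> D - (u - b1)\<^sup>2 - (v - b2)\<^sup>2} x
         \<partial>PiM {..<2*n} (\<lambda>_. lborel) \<partial>lborel \<partial>lborel)"
    by (simp add: chS2 indicator_def I0_def le_diff_eq add_ac)
  also have "\<dots> = (\<integral>\<^sup>+v. \<integral>\<^sup>+u. ennreal (pi^n / (fact n * (real n + 1))) *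
      ennreal (if q * ((u - p1)\<^sup>2 + (v - p2)\<^sup>2) \<le> T then (T - q * ((u - p1)\<^sup>2 + (v - p2)\<^sup>2))^n else 0) \<partial>lborel \<partial>lborel)"
  proof (intro nn_integral_cong)
    fix u v :: real
    have N: "N > 0" by (simp add: N_def)
    have key: "((a1-u)\<^sup>2+(a2-v)\<^sup>2)/N + (u-b1)\<^sup>2 + (v-b2)\<^sup>2 = q * ((u - p1)\<^sup>2 + (v - p2)\<^sup>2) + s/(N+1)"
      using quad_id[OF N, of a1 u b1] quad_id[OF N, of a2 v b2]
      by (simp add: add_divide_distrib distrib_left q_def p1_def p2_def s_def)
    have c: "(((a1-u)\<^sup>2+(a2-v)\<^sup>2)/N \<le> D - (u - b1)\<^sup>2 - (v - b2)\<^sup>2) = (q * ((u - p1)\<^sup>2 + (v - p2)\<^sup>2) \<le> T)"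
      using key unfolding T_def by linarith
    have d: "D - (u - b1)\<^sup>2 - (v - b2)\<^sup>2 - ((a1-u)\<^sup>2+(a2-v)\<^sup>2)/N = T - q * ((u - p1)\<^sup>2 + (v - p2)\<^sup>2)"
      using key unfolding T_def by linarith
    show "(\<integral>\<^sup>+x. indicator {x. ch n a1 a2 u v x \<le> D - (u - b1)\<^sup>2 - (v - b2)\<^sup>2} x \<partial>PiM {..<2*n} (\<lambda>_. lborel))
      = ennreal (pi^n / (fact n * (real n + 1))) *
      ennreal (if q * ((u - p1)\<^sup>2 + (v - p2)\<^sup>2) \<le> T then (T - q * ((u - p1)\<^sup>2 + (v - p2)\<^sup>2))^n else 0)"
      unfolding Suc.IH N_def[symmetric] c d
      by (subst ennreal_mult'[symmetric]) (auto simp: N_def)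
  qed
  also have "\<dots> = ennreal (pi^n / (fact n * (real n + 1))) * (\<integral>\<^sup>+v. \<integral>\<^sup>+u.
      ennreal (if q * ((u - p1)\<^sup>2 + (v - p2)\<^sup>2) \<le> T then (T - q * ((u - p1)\<^sup>2 + (v - p2)\<^sup>2))^n else 0) \<partial>lborel \<partial>lborel)"
  proof -
    have m: "(\<lambda>v. \<integral>\<^sup>+u. ennreal (if q * ((u - p1)\<^sup>2 + (v - p2)\<^sup>2) \<le> T then (T - q * ((u - p1)\<^sup>2 + (v - p2)\<^sup>2))^n else 0) \<partial>lborel) \<in> borel_measurable lborel"
      by measurable
    show ?thesis using m by (simp add: nn_integral_cmult)
  qed
  also have "\<dots> = ennreal (pi^n / (fact n * (real n + 1))) * ennreal (if T > 0 then pi * T^(n+1) / (q * (real n + 1)) else 0)"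
    by (subst disk2_gen) (auto simp: q_def N_def)
  also have "\<dots> = ennreal (pi^Suc n / (fact (Suc n) * (real (Suc n) + 1)) *
       (if ((a1-b1)\<^sup>2+(a2-b2)\<^sup>2)/(real (Suc n)+1) \<le> D then (D - ((a1-b1)\<^sup>2+(a2-b2)\<^sup>2)/(real (Suc n)+1))^Suc n else 0))"
  proof -
    have N: "N > 0" by (simp add: N_def)
    have e: "real (Suc n) + 1 = N + 1" by (simp add: N_def)
    have f: "fact (Suc n) = N * fact n" by (simp add: N_def)
    have cond: "(s/(N+1) \<le> D) = (T \<ge> 0)" by (auto simp: T_def)
    have "ennreal (pi^n / (fact n * N)) * ennreal (if T > 0 then pi * T^(n+1) / (q * N) else 0)
        = ennreal (pi^Suc n / (N * fact n * (N + 1)) * (if T \<ge> 0 then T^Suc n else 0))"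
    proof (cases "T > 0")
      case True
      then show ?thesis using N
        by (subst ennreal_mult'[symmetric]) (auto simp: q_def field_simps intro!: arg_cong[where f=ennreal])
    next
      case False
      then show ?thesis by (cases "T = 0") auto
    qed
    then show ?thesis unfolding e f s_def[symmetric] N_def[symmetric] T_def[symmetric] by (simp only: cond)
  qed
  finally show ?case .
qed




lemma vol_d:
  "(\<integral>\<^sup>+Z. indicator {Z. ch m (-R/2) 0 (R/2) 0 Z \<le> t} Z \<partial>PiM {..<2*m} (\<lambda>_. lborel))
   = ennreal (pi^m / (fact m * (real m + 1)) * (if R\<^sup>2/(real m+1) \<le> t then (t - R\<^sup>2/(real m+1))^m else 0))"
  using vol[of m "-R/2" 0 "R/2" 0 t] by simp

lemma exp_split:
  assumes "L > 0"
  shows "indicator {Z. x \<le> D} Z * ennreal (exp (- L * x))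
     = ennreal (exp (- L * D)) * indicator {Z. x \<le> D} Z + (\<integral>\<^sup>+t. ennreal (L * exp (- L * t)) * indicator {x..D} t \<partial>lborel)"
proof (cases "x \<le> D")
  case True
  have "(\<integral>\<^sup>+t. ennreal (L * exp (- L * t)) * indicator {x..D} t \<partial>lborel) = ennreal ((- exp (- L * D)) - (- exp (- L * x)))"
    by (rule nn_integral_FTC_Icc) (use assms True in \<open>auto intro!: derivative_eq_intros\<close>)
  moreover have "exp (- L * D) \<le> exp (- L * x)" using assms True by simp
  ultimately show ?thesis using True
    by (simp add: ennreal_plus[symmetric] del: ennreal_plus)
next
  case False
  then show ?thesis by simp
qed

lemma layer:
  assumes L: "L > 0" and dm[measurable]: "d \<in> borel_measurable M" and sf: "sigma_finite_measure M"
  shows "(\<integral>\<^sup>+Z. indicator {Z. d Z \<le> D} Z * ennreal (exp (- L * d Z)) \<partial>M)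
    = ennreal (exp (- L * D)) * (\<integral>\<^sup>+Z. indicator {Z. d Z \<le> D} Z \<partial>M)
      + (\<integral>\<^sup>+t. ennreal (L * exp (- L * t)) * indicator {..D} t * (\<integral>\<^sup>+Z. indicator {Z. d Z \<le> t} Z \<partial>M) \<partial>lborel)"
proof -
  interpret pair_sigma_finite M lborel
    using sf by (intro pair_sigma_finite.intro) (auto simp: lborel.sigma_finite_measure_axioms)
  have [measurable]: "Measurable.pred (M \<Otimes>\<^sub>M borel) (\<lambda>x. snd x \<in> {d (fst x)..D})"
    unfolding atLeastAtMost_iff by measurable
  have [measurable]: "Measurable.pred (M \<Otimes>\<^sub>M lborel) (\<lambda>x. snd x \<in> {d (fst x)..D})"
    unfolding atLeastAtMost_iff by measurable
  have "(\<integral>\<^sup>+Z. indicator {Z. d Z \<le> D} Z * ennreal (exp (- L * d Z)) \<partial>M)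
     = (\<integral>\<^sup>+Z. ennreal (exp (- L * D)) * indicator {Z. d Z \<le> D} Z + (\<integral>\<^sup>+t. ennreal (L * exp (- L * t)) * indicator {d Z..D} t \<partial>lborel) \<partial>M)"
    apply (intro nn_integral_cong)
    subgoal for Z using exp_split[OF L, of "d Z" D Z] by (cases "d Z \<le> D") (simp_all add: indicator_def)
    done
  also have "\<dots> = (\<integral>\<^sup>+Z. ennreal (exp (- L * D)) * indicator {Z. d Z \<le> D} Z \<partial>M)
      + (\<integral>\<^sup>+Z. (\<integral>\<^sup>+t. ennreal (L * exp (- L * t)) * indicator {d Z..D} t \<partial>lborel) \<partial>M)"
    by (rule nn_integral_add) measurable
  also have "(\<integral>\<^sup>+Z. ennreal (exp (- L * D)) * indicator {Z. d Z \<le> D} Z \<partial>M)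
     = ennreal (exp (- L * D)) * (\<integral>\<^sup>+Z. indicator {Z. d Z \<le> D} Z \<partial>M)"
    by (rule nn_integral_cmult) measurable
  also have "(\<integral>\<^sup>+Z. (\<integral>\<^sup>+t. ennreal (L * exp (- L * t)) * indicator {d Z..D} t \<partial>lborel) \<partial>M)
     = (\<integral>\<^sup>+t. (\<integral>\<^sup>+Z. ennreal (L * exp (- L * t)) * indicator {d Z..D} t \<partial>M) \<partial>lborel)"
    by (rule Fubini'[symmetric]) measurable
  also have "\<dots> = (\<integral>\<^sup>+t. ennreal (L * exp (- L * t)) * indicator {..D} t * (\<integral>\<^sup>+Z. indicator {Z. d Z \<le> t} Z \<partial>M) \<partial>lborel)"
  proof (intro nn_integral_cong)
    fix t :: real
    have "(\<integral>\<^sup>+Z. ennreal (L * exp (- L * t)) * indicator {d Z..D} t \<partial>M)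
       = (\<integral>\<^sup>+Z. (ennreal (L * exp (- L * t)) * indicator {..D} t) * indicator {Z. d Z \<le> t} Z \<partial>M)"
      by (intro nn_integral_cong) (auto simp: indicator_def)
    also have "\<dots> = ennreal (L * exp (- L * t)) * indicator {..D} t * (\<integral>\<^sup>+Z. indicator {Z. d Z \<le> t} Z \<partial>M)"
      by (rule nn_integral_cmult) measurable
    finally show "(\<integral>\<^sup>+Z. ennreal (L * exp (- L * t)) * indicator {d Z..D} t \<partial>M) = \<dots>" .
  qed
  finally show ?thesis .
qed


lemma erl:
  assumes L: "L > 0" and c: "c \<ge> 0"
  shows "(\<integral>\<^sup>+t. ennreal (L * exp (- L * t)) * indicator {..D} t * ennreal (c * (if t0 \<le> t then (t - t0)^m else 0)) \<partial>lborel)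
     = ennreal (c * exp (- L * t0) * fact m / L^m * erlang_CDF m L (D - t0))"
proof -
  have "(\<integral>\<^sup>+t. ennreal (L * exp (- L * t)) * indicator {..D} t * ennreal (c * (if t0 \<le> t then (t - t0)^m else 0)) \<partial>lborel)
     = (\<integral>\<^sup>+s. ennreal (L * exp (- L * (t0 + 1 * s))) * indicator {..D} (t0 + 1 * s) * ennreal (c * (if t0 \<le> t0 + 1 * s then (t0 + 1 * s - t0)^m else 0)) \<partial>lborel)"
    by (subst nn_integral_real_affine[where c=1 and t=t0]) auto
  also have "\<dots> = (\<integral>\<^sup>+s. ennreal (c * exp (- L * t0) * fact m / L^m) * (ennreal (erlang_density m L s) * indicator {..D - t0} s) \<partial>lborel)"
  proof (intro nn_integral_cong)
    fix s :: real
    show "ennreal (L * exp (- L * (t0 + 1 * s))) * indicator {..D} (t0 + 1 * s) * ennreal (c * (if t0 \<le> t0 + 1 * s then (t0 + 1 * s - t0)^m else 0))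
       = ennreal (c * exp (- L * t0) * fact m / L^m) * (ennreal (erlang_density m L s) * indicator {..D - t0} s)"
    proof (cases "s \<ge> 0 \<and> t0 + s \<le> D")
      case True
      have "L * exp (- L * (t0 + s)) * (c * s^m) = c * exp (- L * t0) * fact m / L^m * erlang_density m L s"
        using True L by (simp add: erlang_density_def field_simps exp_add[symmetric] exp_diff)
      moreover have "L * exp (- L * (t0 + s)) \<ge> 0" using L by simp
      moreover have "c * exp (- L * t0) * fact m / L^m \<ge> 0" using L c by simp
      ultimately show ?thesis using True c
        by (simp add: ennreal_mult'[symmetric] indicator_def)
    next
      case False
      then show ?thesis by (auto simp: indicator_def erlang_density_def)
    qed
  qed
  also have "\<dots> = ennreal (c * exp (- L * t0) * fact m / L^m) * ennreal (erlang_CDF m L (D - t0))"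
    by (subst nn_integral_cmult) (auto simp: nn_integral_erlang_density[OF L])
  also have "\<dots> = ennreal (c * exp (- L * t0) * fact m / L^m * erlang_CDF m L (D - t0))"
    using L c by (simp add: ennreal_mult[symmetric])
  finally show ?thesis .
qed




lemma final_alg:
  fixes C0 c L t0 T E0 ET S X :: real and m :: nat
  assumes "E = 1 - ET * (S + X)" "X = (L*T)^m / fact m" "L > 0"
  shows "C0 * (E0 * ET * (c * T^m) + c * E0 * fact m / L^m * E) = C0 * c * fact m / L^m * (E0 - E0 * ET * S)"
proof -
  define B where "B = c * E0 * fact m / L^m"
  have 1: "B * (ET * X) = E0 * ET * (c * T^m)"
    using assms unfolding B_def by (simp add: power_mult_distrib field_simps)
  have "C0 * (E0 * ET * (c * T^m) + c * E0 * fact m / L^m * E) = C0 * (B * (ET * X) + B * (1 - ET * (S + X)))"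
    using 1 unfolding B_def assms(1) by simp
  also have "\<dots> = C0 * (B - B * ET * S)" by (simp add: algebra_simps)
  also have "\<dots> = C0 * c * fact m / L^m * (E0 - E0 * ET * S)" unfolding B_def using assms(3) by (simp add: field_simps)
  finally show ?thesis .
qed

lemma t1: "(f::real) \<noteq> 0 \<Longrightarrow> X * (P / (f * Q)) * f / Y = X * P / (Q * Y)"
  by (simp add: divide_simps)

lemma t2: "(l::real) > 0 \<Longrightarrow> g > 0 \<Longrightarrow> k > 0 \<Longrightarrow> l^m * a^m * G^(m+1) * p^m / (Q * (l*g*k)^m) = G * (G * p * a / (g * k)) ^ m / Q"
  by (simp add: power_mult_distrib power_divide mult_ac)

lemma const_alg:
  fixes lam gam K G a :: real and m :: nat
  assumes "lam > 0" "gam > 0" "K > 0"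
  shows "lam^m * a^m * G^(m+1) * (pi^m / (fact m * (real m + 1))) * fact m / (lam * gam * K)^m
     = G * (G * pi * a / (gam * K)) ^ m / (real m + 1)"
  using t1[of "fact m" "lam^m * a^m * G^(m+1)" "pi^m" "real m + 1" "(lam * gam * K)^m"] t2[OF assms, of m a G pi "real m + 1"]
  by simp

theorem lemma1:
  fixes G K lam gam R D :: real and m :: nat
  assumes "G > 0" and "K > 0" and "lam > 0" and "0 < gam" and "gam < 1" and "R > 0"
    and "m \<ge> 1" and "D \<ge> R\<^sup>2 / (m + 1)"
  defines "\<kappa> \<equiv> G * pi * (1 - gam) / (gam * K)"
    and "\<Lambda> \<equiv> lam * gam * K"
  shows "expected_N G K lam gam R m D =
    ennreal (G * \<kappa> ^ m / (m + 1) *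
      (exp (- \<Lambda> * R\<^sup>2 / (m + 1))
       - exp (- \<Lambda> * D) * (\<Sum>i=0..m-1. (\<Lambda> * (D - R\<^sup>2 / (m + 1))) ^ i / fact i)))"
proof -
  define M where "M = PiM {..<2*m} (\<lambda>_. lborel::real measure)"
  define d where "d = ch m (-R/2) 0 (R/2) 0"
  define C0 where "C0 = lam^m * (1-gam)^m * G^(m+1)"
  define t0 where "t0 = R\<^sup>2 / (real m + 1)"
  define T where "T = D - t0"
  define c where "c = pi^m / (fact m * (real m + 1))"
  have L: "\<Lambda> > 0" using assms by (simp add: \<Lambda>_def)
  have C0: "C0 \<ge> 0" using assms by (simp add: C0_def)
  have c: "c \<ge> 0" by (simp add: c_def)
  have Dt0: "t0 \<le> D" using assms(8) by (simp add: t0_def add.commute)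
  have T: "T \<ge> 0" using Dt0 by (simp add: T_def)
  have dm[measurable]: "d \<in> borel_measurable M" unfolding d_def M_def by (rule ch_meas')
  have sf: "sigma_finite_measure M" unfolding M_def
    by (rule product_sigma_finite.sigma_finite) (auto simp: product_sigma_finite_def lborel.sigma_finite_measure_axioms)
  have V: "(\<integral>\<^sup>+Z. indicator {Z. d Z \<le> t} Z \<partial>M) = ennreal (c * (if t0 \<le> t then (t - t0)^m else 0))" for t
    unfolding M_def d_def c_def t0_def by (rule vol_d)
  have "expected_N G K lam gam R m D = (\<integral>\<^sup>+Z. ennreal C0 * (indicator {Z. d Z \<le> D} Z * ennreal (exp (- \<Lambda> * d Z))) \<partial>M)"
    unfolding expected_N_def M_def[symmetric]
  proof (intro nn_integral_cong)
    fix Z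
    have "d_m R m Z = d Z" using assms by (simp add: d_m_ch d_def)
    then show "indicator {Z. d_m R m Z \<le> D} Z * ennreal (lam ^ m * (1 - gam) ^ m * g_m G K R m Z (lam * gam))
      = ennreal C0 * (indicator {Z. d Z \<le> D} Z * ennreal (exp (- \<Lambda> * d Z)))"
      using C0 by (simp add: g_m_def C0_def \<Lambda>_def ennreal_mult'[symmetric] indicator_def mult_ac)
  qed
  also have "\<dots> = ennreal C0 * (\<integral>\<^sup>+Z. indicator {Z. d Z \<le> D} Z * ennreal (exp (- \<Lambda> * d Z)) \<partial>M)"
    by (rule nn_integral_cmult) measurable
  also have "(\<integral>\<^sup>+Z. indicator {Z. d Z \<le> D} Z * ennreal (exp (- \<Lambda> * d Z)) \<partial>M)
     = ennreal (exp (- \<Lambda> * D)) * ennreal (c * T^m) + ennreal (c * exp (- \<Lambda> * t0) * fact m / \<Lambda>^m * erlang_CDF m \<Lambda> T)"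
    unfolding layer[OF L dm sf] V erl[OF L c] T_def using Dt0 by simp
  also have "ennreal C0 * (ennreal (exp (- \<Lambda> * D)) * ennreal (c * T^m) + ennreal (c * exp (- \<Lambda> * t0) * fact m / \<Lambda>^m * erlang_CDF m \<Lambda> T))
     = ennreal (C0 * (exp (- \<Lambda> * D) * (c * T^m) + c * exp (- \<Lambda> * t0) * fact m / \<Lambda>^m * erlang_CDF m \<Lambda> T))"
    using C0 c T L by (simp add: ennreal_mult'[symmetric] ennreal_plus[symmetric] del: ennreal_plus)
  finally have main: "expected_N G K lam gam R m D = ennreal (C0 * (exp (- \<Lambda> * D) * (c * T^m) + c * exp (- \<Lambda> * t0) * fact m / \<Lambda>^m * erlang_CDF m \<Lambda> T))" .
  define S where "S = (\<Sum>i<m. (\<Lambda> * T) ^ i / fact i)"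
  define X where "X = (\<Lambda> * T) ^ m / fact m"
  have ECDF: "erlang_CDF m \<Lambda> T = 1 - exp (- \<Lambda> * T) * (S + X)"
  proof -
    have "(\<Sum>n\<le>m. (\<Lambda> * T) ^ n * exp (- \<Lambda> * T) / fact n) = exp (- \<Lambda> * T) * (\<Sum>n\<le>m. (\<Lambda> * T) ^ n / fact n)"
      by (simp add: sum_distrib_left mult_ac)
    also have "(\<Sum>n\<le>m. (\<Lambda> * T) ^ n / fact n) = S + X"
      unfolding S_def X_def lessThan_Suc_atMost[symmetric] by simp
    finally show ?thesis using T by (simp add: erlang_CDF_def)
  qed
  have eD: "exp (- \<Lambda> * D) = exp (- \<Lambda> * t0) * exp (- \<Lambda> * T)"
    by (simp add: T_def exp_add[symmetric] algebra_simps)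
  have "C0 * (exp (- \<Lambda> * D) * (c * T^m) + c * exp (- \<Lambda> * t0) * fact m / \<Lambda>^m * erlang_CDF m \<Lambda> T)
      = C0 * c * fact m / \<Lambda>^m * (exp (- \<Lambda> * t0) - exp (- \<Lambda> * t0) * exp (- \<Lambda> * T) * S)"
    unfolding eD by (rule final_alg[OF ECDF X_def L])
  also have "C0 * c * fact m / \<Lambda>^m = G * \<kappa> ^ m / (real m + 1)"
    unfolding C0_def c_def \<Lambda>_def \<kappa>_def using const_alg[of lam gam K m "1-gam" G] assms by simp
  also have "exp (- \<Lambda> * t0) * exp (- \<Lambda> * T) = exp (- \<Lambda> * D)" using eD by simp
  also have "exp (- \<Lambda> * t0) = exp (- \<Lambda> * R\<^sup>2 / (real m + 1))" by (simp add: t0_def)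
  also have "S = (\<Sum>i=0..m-1. (\<Lambda> * (D - R\<^sup>2 / (real m + 1))) ^ i / fact i)"
  proof -
    have "{0..m-1} = {..<m}" using assms(7) by auto
    then show ?thesis by (simp add: S_def T_def t0_def)
  qed
  finally have fin: "C0 * (exp (- \<Lambda> * D) * (c * T^m) + c * exp (- \<Lambda> * R\<^sup>2 / (real m + 1)) * fact m / \<Lambda>^m * erlang_CDF m \<Lambda> T) = G * \<kappa> ^ m / (real m + 1) * (exp (- \<Lambda> * R\<^sup>2 / (real m + 1)) - exp (- \<Lambda> * D) * (\<Sum>i=0..m-1. (\<Lambda> * (D - R\<^sup>2 / (real m + 1))) ^ i / fact i))" .
  have et0: "exp (- \<Lambda> * t0) = exp (- \<Lambda> * R\<^sup>2 / (real m + 1))" by (simp add: t0_def)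
  show ?thesis unfolding of_nat_add of_nat_1 main et0 fin by (rule refl)
qed



end
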